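(* Let $\Gamma$ be a connected $\mathbb Z$-leg-weighted graph. Then all but finitely many weightings $w\in W(\Gamma)$ admit a positive cycle, i.e. a cycle $\gamma$ in $\Gamma$ such that $w(e)>0$ for every directed edge $e\in\gamma$ (where $w(e)$ is the value of $w$ on the half-edge of $e$ at its source).
   Context: A graph consists of finite sets $V$ (vertices) and $H$ (half-edges), a map $\mathrm{end}\colon H\to V$, an involution $i$ of $H$, a genus $g\colon V\to\mathbb Z_{\ge0}$ and an integer twist $k$. Legs are fixed points of $i$; a directed edge is a non-leg half-edge $h$, with source $\mathrm{end}(h)$ and target $\mathrm{end}(i(h))$. $\mathrm{val}(v)$ is the number of non-leg half-edges at $v$, $\kappa(v)=2g(v)-2+\mathrm{val}(v)$, $g(\Gamma)=b_1(\Gamma)+\sum_vg(v)$. A cycle is a closed walk of directed edges (target of each equals source of the next, returning to the start) repeating no vertex or undirected edge. A weighting is $w\colon H\to\mathbb Z$ with $w(h)+w(i(h))=0$ for $h\neq i(h)$ and $\sum_{\mathrm{end}(h)=v}w(h)+k\kappa(v)=0$ for all vertices $v$. A leg-weighted graph has given integer leg values summing to $-k(2g(\Gamma)-2)$, and $W(\Gamma)$ is the set of weightings with these leg values. *)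

theory Defs
  imports Main
begin

text \<open>A graph: vertex set V, half-edge set H, map endf : H -> V, involution ii of H,
  genus function gen : V -> nat. The twist k is an integer parameter.\<close>

definition is_graph :: "'v set \<Rightarrow> 'h set \<Rightarrow> ('h \<Rightarrow> 'v) \<Rightarrow> ('h \<Rightarrow> 'h) \<Rightarrow> bool" where
  "is_graph V H endf ii \<longleftrightarrow> finite V \<and> finite H \<and> endf ` H \<subseteq> V \<and>
     ii ` H \<subseteq> H \<and> (\<forall>h\<in>H. ii (ii h) = h)"

definition is_leg :: "('h \<Rightarrow> 'h) \<Rightarrow> 'h \<Rightarrow> bool" where
  "is_leg ii h \<longleftrightarrow> ii h = h"

text \<open>Non-leg half-edges = directed edges.\<close>
definition dedges :: "'h set \<Rightarrow> ('h \<Rightarrow> 'h) \<Rightarrow> 'h set" where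
  "dedges H ii = {h\<in>H. ii h \<noteq> h}"

definition source :: "('h \<Rightarrow> 'v) \<Rightarrow> 'h \<Rightarrow> 'v" where
  "source endf h = endf h"

definition target :: "('h \<Rightarrow> 'v) \<Rightarrow> ('h \<Rightarrow> 'h) \<Rightarrow> 'h \<Rightarrow> 'v" where
  "target endf ii h = endf (ii h)"

definition val :: "'h set \<Rightarrow> ('h \<Rightarrow> 'v) \<Rightarrow> ('h \<Rightarrow> 'h) \<Rightarrow> 'v \<Rightarrow> nat" where
  "val H endf ii v = card {h\<in>dedges H ii. endf h = v}"

definition kappa :: "'h set \<Rightarrow> ('h \<Rightarrow> 'v) \<Rightarrow> ('h \<Rightarrow> 'h) \<Rightarrow> ('v \<Rightarrow> nat) \<Rightarrow> 'v \<Rightarrow> int" where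
  "kappa H endf ii gen v = 2 * int (gen v) - 2 + int (val H endf ii v)"

definition adj :: "'h set \<Rightarrow> ('h \<Rightarrow> 'v) \<Rightarrow> ('h \<Rightarrow> 'h) \<Rightarrow> ('v \<times> 'v) set" where
  "adj H endf ii = {(endf h, endf (ii h)) | h. h \<in> dedges H ii}"

definition connected_graph :: "'v set \<Rightarrow> 'h set \<Rightarrow> ('h \<Rightarrow> 'v) \<Rightarrow> ('h \<Rightarrow> 'h) \<Rightarrow> bool" where
  "connected_graph V H endf ii \<longleftrightarrow> (\<forall>u\<in>V. \<forall>v\<in>V. (u, v) \<in> (adj H endf ii)\<^sup>*)"

definition num_components :: "'v set \<Rightarrow> 'h set \<Rightarrow> ('h \<Rightarrow> 'v) \<Rightarrow> ('h \<Rightarrow> 'h) \<Rightarrow> nat" where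
  "num_components V H endf ii = card (V // Restr ((adj H endf ii)\<^sup>*) V)"

definition num_edges :: "'h set \<Rightarrow> ('h \<Rightarrow> 'h) \<Rightarrow> nat" where
  "num_edges H ii = card {{h, ii h} | h. h \<in> dedges H ii}"

definition betti1 :: "'v set \<Rightarrow> 'h set \<Rightarrow> ('h \<Rightarrow> 'v) \<Rightarrow> ('h \<Rightarrow> 'h) \<Rightarrow> int" where
  "betti1 V H endf ii = int (num_edges H ii) - int (card V) + int (num_components V H endf ii)"

definition graph_genus :: "'v set \<Rightarrow> 'h set \<Rightarrow> ('h \<Rightarrow> 'v) \<Rightarrow> ('h \<Rightarrow> 'h) \<Rightarrow> ('v \<Rightarrow> nat) \<Rightarrow> int" where
  "graph_genus V H endf ii gen = betti1 V H endf ii + (\<Sum>v\<in>V. int (gen v))"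

text \<open>Weightings (with twist k). Functions are required to vanish outside H, so that
  a weighting is determined by its values on H.\<close>
definition is_weighting :: "'v set \<Rightarrow> 'h set \<Rightarrow> ('h \<Rightarrow> 'v) \<Rightarrow> ('h \<Rightarrow> 'h) \<Rightarrow> ('v \<Rightarrow> nat) \<Rightarrow> int
    \<Rightarrow> ('h \<Rightarrow> int) \<Rightarrow> bool" where
  "is_weighting V H endf ii gen k w \<longleftrightarrow>
     (\<forall>h. h \<notin> H \<longrightarrow> w h = 0) \<and>
     (\<forall>h\<in>dedges H ii. w h + w (ii h) = 0) \<and>
     (\<forall>v\<in>V. (\<Sum>h\<in>{h\<in>H. endf h = v}. w h) + k * kappa H endf ii gen v = 0)"

definition leg_weighted :: "'v set \<Rightarrow> 'h set \<Rightarrow> ('h \<Rightarrow> 'v) \<Rightarrow> ('h \<Rightarrow> 'h) \<Rightarrow> ('v \<Rightarrow> nat) \<Rightarrow> int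
    \<Rightarrow> ('h \<Rightarrow> int) \<Rightarrow> bool" where
  "leg_weighted V H endf ii gen k lv \<longleftrightarrow>
     (\<Sum>h\<in>{h\<in>H. is_leg ii h}. lv h) = - k * (2 * graph_genus V H endf ii gen - 2)"

definition weightings :: "'v set \<Rightarrow> 'h set \<Rightarrow> ('h \<Rightarrow> 'v) \<Rightarrow> ('h \<Rightarrow> 'h) \<Rightarrow> ('v \<Rightarrow> nat) \<Rightarrow> int
    \<Rightarrow> ('h \<Rightarrow> int) \<Rightarrow> ('h \<Rightarrow> int) set" where
  "weightings V H endf ii gen k lv =
     {w. is_weighting V H endf ii gen k w \<and> (\<forall>h\<in>H. is_leg ii h \<longrightarrow> w h = lv h)}"

definition is_cycle :: "'h set \<Rightarrow> ('h \<Rightarrow> 'v) \<Rightarrow> ('h \<Rightarrow> 'h) \<Rightarrow> 'h list \<Rightarrow> bool" where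
  "is_cycle H endf ii c \<longleftrightarrow> c \<noteq> [] \<and> set c \<subseteq> dedges H ii \<and>
     (\<forall>j<length c. target endf ii (c ! j) = source endf (c ! ((j + 1) mod length c))) \<and>
     distinct (map (source endf) c) \<and>
     distinct (map (\<lambda>h. {h, ii h}) c)"

definition positive_cycle :: "'h set \<Rightarrow> ('h \<Rightarrow> 'v) \<Rightarrow> ('h \<Rightarrow> 'h) \<Rightarrow> ('h \<Rightarrow> int) \<Rightarrow> 'h list \<Rightarrow> bool" where
  "positive_cycle H endf ii w c \<longleftrightarrow> is_cycle H endf ii c \<and> (\<forall>h\<in>set c. w h > 0)"

end

theory Submission
  imports Defs
begin

definition posrel :: "'h set \<Rightarrow> ('h \<Rightarrow> 'v) \<Rightarrow> ('h \<Rightarrow> 'h) \<Rightarrow> ('h \<Rightarrow> int) \<Rightarrow> ('v \<times> 'v) set" where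
  "posrel H endf ii w = {(endf g, endf (ii g)) | g. g \<in> dedges H ii \<and> w g > 0}"

lemma walk:
  assumes "(a,b) \<in> (posrel H endf ii w)\<^sup>+"
  shows "\<exists>c. c \<noteq> [] \<and> (\<forall>g\<in>set c. g \<in> dedges H ii \<and> w g > 0) \<and> endf (hd c) = a
     \<and> endf (ii (last c)) = b \<and> (\<forall>j. Suc j < length c \<longrightarrow> endf (ii (c!j)) = endf (c!Suc j))"
  using assms
proof (induction rule: converse_trancl_induct)
  case (base y)
  then obtain g where "y = endf g" "b = endf (ii g)" "g \<in> dedges H ii" "w g > 0"
    unfolding posrel_def by blast
  then show ?case by (intro exI[of _ "[g]"]) auto
next
  case (step y z)
  then obtain g where g: "y = endf g" "z = endf (ii g)" "g \<in> dedges H ii" "w g > 0"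
    unfolding posrel_def by blast
  from step.IH obtain c where c: "c \<noteq> []" "(\<forall>g\<in>set c. g \<in> dedges H ii \<and> w g > 0)" "endf (hd c) = z"
     "endf (ii (last c)) = b" "(\<forall>j. Suc j < length c \<longrightarrow> endf (ii (c!j)) = endf (c!Suc j))" by blast
  have "\<forall>j. Suc j < length (g#c) \<longrightarrow> endf (ii ((g#c)!j)) = endf ((g#c)!Suc j)"
  proof (intro allI impI)
    fix j assume j: "Suc j < length (g#c)"
    show "endf (ii ((g#c)!j)) = endf ((g#c)!Suc j)"
    proof (cases j)
      case 0 then show ?thesis using g c by (simp add: hd_conv_nth)
    next
      case (Suc j') then show ?thesis using c j by simp
    qed
  qed
  then show ?case using g c by (intro exI[of _ "g#c"]) auto
qed

lemma min_cycle:
  assumes wd: "\<forall>g\<in>dedges H ii. w g + w (ii g) = 0"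
  shows "\<forall>c. length c = n \<longrightarrow> c \<noteq> [] \<longrightarrow> (\<forall>g\<in>set c. g \<in> dedges H ii \<and> w g > 0) \<longrightarrow>
     (\<forall>j<length c. endf (ii (c!j)) = endf (c!((j+1) mod length c))) \<longrightarrow>
     (\<exists>c'. positive_cycle H endf ii w c')"
proof (induction n rule: less_induct)
  case (less n)
  show ?case
  proof (intro allI impI)
    fix c :: "'a list"
    assume len: "length c = n" and ne: "c \<noteq> []" and pos: "\<forall>g\<in>set c. g \<in> dedges H ii \<and> w g > 0"
      and cl: "\<forall>j<length c. endf (ii (c!j)) = endf (c!((j+1) mod length c))"
    show "\<exists>c'. positive_cycle H endf ii w c'"
    proof (cases "distinct (map endf c)")
      case True
      have "distinct (map (\<lambda>h. {h, ii h}) c)"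
        unfolding distinct_conv_nth
      proof (intro allI impI)
        fix i j assume ij: "i < length (map (\<lambda>h. {h, ii h}) c)" "j < length (map (\<lambda>h. {h, ii h}) c)" "i \<noteq> j"
        show "map (\<lambda>h. {h, ii h}) c ! i \<noteq> map (\<lambda>h. {h, ii h}) c ! j"
        proof
          assume eq: "map (\<lambda>h. {h, ii h}) c ! i = map (\<lambda>h. {h, ii h}) c ! j"
          have ci: "c!i \<in> set c" "c!j \<in> set c" using ij by auto
          from eq ij have e2: "{c!i, ii (c!i)} = {c!j, ii (c!j)}" by simp
          have "endf (c!i) \<noteq> endf (c!j)" using True ij by (auto simp: distinct_conv_nth)
          then have "c!i \<noteq> c!j" by auto
          with e2 have "c!i = ii (c!j)" by (auto simp: doubleton_eq_iff)
          moreover have "w (c!j) + w (ii (c!j)) = 0" using wd pos ci by auto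
          moreover have "w (c!i) > 0" "w (c!j) > 0" using pos ci by auto
          ultimately show False by simp
        qed
      qed
      then have "positive_cycle H endf ii w c"
        unfolding positive_cycle_def is_cycle_def source_def target_def
        using True ne pos cl by auto
      then show ?thesis by blast
    next
      case False
      then obtain i j where ij: "i < j" "j < length c" "endf (c!i) = endf (c!j)"
        unfolding distinct_conv_nth by (auto simp: nat_neq_iff)
      define c' where "c' = take (j-i) (drop i c)"
      have lc': "length c' = j - i" using ij unfolding c'_def by simp
      have nth': "\<And>m. m < j - i \<Longrightarrow> c'!m = c!(i+m)" using ij unfolding c'_def by simp
      have "c' \<noteq> []" using lc' ij by auto
      moreover have "\<forall>g\<in>set c'. g \<in> dedges H ii \<and> w g > 0"
        using pos unfolding c'_def by (meson in_set_dropD in_set_takeD)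
      moreover have "\<forall>m<length c'. endf (ii (c'!m)) = endf (c'!((m+1) mod length c'))"
      proof (intro allI impI)
        fix m assume m: "m < length c'"
        have clm: "endf (ii (c!(i+m))) = endf (c!((i+m+1) mod length c))" using cl m lc' ij by auto
        have mod1: "(i+m+1) mod length c = i+m+1" using m lc' ij by auto
        show "endf (ii (c'!m)) = endf (c'!((m+1) mod length c'))"
        proof (cases "m+1 < j - i")
          case True
          then show ?thesis using clm mod1 nth' m lc' by simp
        next
          case False
          then have "m + 1 = j - i" using m lc' by simp
          then have "(m+1) mod length c' = 0" "i+m+1 = j" using lc' ij by auto
          then show ?thesis using clm mod1 nth' m lc' ij by simp
        qed
      qed
      moreover have "length c' < n" using lc' ij len by simp
      ultimately show ?thesis using less.IH by blast
    qed
  qed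
qed

lemma loop_cycle:
  assumes wd: "\<forall>g\<in>dedges H ii. w g + w (ii g) = 0"
    and "(x,x) \<in> (posrel H endf ii w)\<^sup>+"
  shows "\<exists>c'. positive_cycle H endf ii w c'"
proof -
  obtain c where c: "c \<noteq> []" "(\<forall>g\<in>set c. g \<in> dedges H ii \<and> w g > 0)" "endf (hd c) = x"
     "endf (ii (last c)) = x" "(\<forall>j. Suc j < length c \<longrightarrow> endf (ii (c!j)) = endf (c!Suc j))"
    using walk[OF assms(2)] by blast
  have "\<forall>j<length c. endf (ii (c!j)) = endf (c!((j+1) mod length c))"
  proof (intro allI impI)
    fix j assume j: "j < length c"
    show "endf (ii (c!j)) = endf (c!((j+1) mod length c))"
    proof (cases "Suc j < length c")
      case True then show ?thesis using c by simp
    next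
      case False
      then have sj: "Suc j = length c" using j by auto
      then have "j = length c - 1" "(j+1) mod length c = 0" by auto
      then show ?thesis using c by (simp add: hd_conv_nth last_conv_nth)
    qed
  qed
  then show ?thesis using min_cycle[OF wd] c by blast
qed


lemma cut_bound:
  assumes G: "is_graph V H endf ii"
    and W: "is_weighting V H endf ii gen k w"
    and L: "\<forall>h\<in>H. is_leg ii h \<longrightarrow> w h = lv h"
    and noc: "\<not> (\<exists>c. positive_cycle H endf ii w c)"
    and hD: "h \<in> dedges H ii" and hpos: "w h > 0"
  shows "w h \<le> (\<Sum>g\<in>{g\<in>H. is_leg ii g}. \<bar>lv g\<bar>) + (\<Sum>x\<in>V. \<bar>k * kappa H endf ii gen x\<bar>)"
proof -
  define P where "P = posrel H endf ii w"
  define u where "u = endf h"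
  define v where "v = endf (ii h)"
  define S where "S = {x\<in>V. (v,x) \<in> P\<^sup>*}"
  have fV: "finite V" and fH: "finite H" and eV: "endf ` H \<subseteq> V" and iH: "ii ` H \<subseteq> H"
    and inv: "\<forall>g\<in>H. ii (ii g) = g" using G unfolding is_graph_def by auto
  have w0: "\<forall>g. g \<notin> H \<longrightarrow> w g = 0" and wd: "\<forall>g\<in>dedges H ii. w g + w (ii g) = 0"
    and wv: "\<forall>x\<in>V. (\<Sum>g\<in>{g\<in>H. endf g = x}. w g) + k * kappa H endf ii gen x = 0"
    using W unfolding is_weighting_def by auto
  have hH: "h \<in> H" "ii h \<noteq> h" using hD unfolding dedges_def by auto
  have uv: "(u,v) \<in> P" unfolding P_def posrel_def u_def v_def using hD hpos by blast
  have uS: "u \<notin> S"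
  proof
    assume "u \<in> S"
    then have "(v,u) \<in> P\<^sup>*" unfolding S_def by auto
    with uv have "(u,u) \<in> P\<^sup>+" by (meson rtrancl_into_trancl2)
    then have "\<exists>c'. positive_cycle H endf ii w c'" using loop_cycle[OF wd, of u endf] unfolding P_def by blast
    then show False using noc by blast
  qed
  have vS: "v \<in> S" unfolding S_def v_def using hH iH eV by auto
  have SV: "S \<subseteq> V" unfolding S_def by auto
  have closedS: "\<And>g. g \<in> dedges H ii \<Longrightarrow> endf g \<in> S \<Longrightarrow> w g > 0 \<Longrightarrow> endf (ii g) \<in> S"
  proof -
    fix g assume g: "g \<in> dedges H ii" "endf g \<in> S" "w g > 0"
    then have "(endf g, endf (ii g)) \<in> P" unfolding P_def posrel_def by blast
    moreover have "(v, endf g) \<in> P\<^sup>*" using g unfolding S_def by auto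
    moreover have "endf (ii g) \<in> V" using g iH eV unfolding dedges_def by auto
    ultimately show "endf (ii g) \<in> S" unfolding S_def by auto
  qed
  define T where "T = {g\<in>H. endf g \<in> S}"
  have fT: "finite T" using fH unfolding T_def by auto
  have fS: "finite S" using fV SV finite_subset by blast
  have sumT: "(\<Sum>g\<in>T. w g) = (\<Sum>x\<in>S. - (k * kappa H endf ii gen x))"
  proof -
    have "(\<Sum>g\<in>T. w g) = (\<Sum>x\<in>S. \<Sum>g\<in>{g. g \<in> T \<and> endf g = x}. w g)"
      using sum.group[OF fT fS, of endf w] unfolding T_def by (metis (no_types, lifting) image_subset_iff mem_Collect_eq)
    also have "\<dots> = (\<Sum>x\<in>S. - (k * kappa H endf ii gen x))"
    proof (rule sum.cong)
      fix x assume x: "x \<in> S"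
      then have "{g. g \<in> T \<and> endf g = x} = {g\<in>H. endf g = x}" unfolding T_def by auto
      then show "(\<Sum>g\<in>{g. g \<in> T \<and> endf g = x}. w g) = - (k * kappa H endf ii gen x)"
        using wv x SV by (auto simp: add_eq_0_iff2)
    qed simp
    finally show ?thesis .
  qed
  define TL where "TL = {g\<in>T. is_leg ii g}"
  define TI where "TI = {g\<in>T. \<not> is_leg ii g \<and> endf (ii g) \<in> S}"
  define TC where "TC = {g\<in>T. \<not> is_leg ii g \<and> endf (ii g) \<notin> S}"
  have Tsplit: "T = TL \<union> TI \<union> TC" unfolding TL_def TI_def TC_def by auto
  have fin3: "finite TL" "finite TI" "finite TC" using fT unfolding TL_def TI_def TC_def by auto
  have sumsplit: "(\<Sum>g\<in>T. w g) = (\<Sum>g\<in>TL. w g) + (\<Sum>g\<in>TI. w g) + (\<Sum>g\<in>TC. w g)"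
    unfolding Tsplit using fin3
    by (subst sum.union_disjoint; (auto simp: TL_def TI_def TC_def)?) (subst sum.union_disjoint; auto simp: TL_def TI_def TC_def)
  have TI0: "(\<Sum>g\<in>TI. w g) = 0"
  proof -
    have "(\<Sum>g\<in>TI. w g) = (\<Sum>g\<in>TI. - w g)"
    proof (rule sum.reindex_bij_witness[where i=ii and j=ii])
      fix a assume a: "a \<in> TI"
      then have aH: "a \<in> H" "ii a \<noteq> a" unfolding TI_def T_def is_leg_def by auto
      show "ii (ii a) = a" using aH inv by auto
      show "ii a \<in> TI" using a aH inv iH unfolding TI_def T_def is_leg_def by auto
      show "ii (ii a) = a" using aH inv by auto
      show "ii a \<in> TI" using a aH inv iH unfolding TI_def T_def is_leg_def by auto
      have "a \<in> dedges H ii" using aH unfolding dedges_def by auto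
      then show "- w (ii a) = w a" using wd by (auto simp: add_eq_0_iff2)
    qed
    then show ?thesis by (simp add: sum_negf)
  qed
  have iiTC: "ii h \<in> TC"
    using hH inv iH vS uS unfolding TC_def T_def is_leg_def u_def v_def by auto
  have TCle: "(\<Sum>g\<in>TC. w g) \<le> w (ii h)"
  proof -
    have "(\<Sum>g\<in>TC. w g) = w (ii h) + (\<Sum>g\<in>TC - {ii h}. w g)"
      using sum.remove[OF fin3(3) iiTC] by simp
    moreover have "(\<Sum>g\<in>TC - {ii h}. w g) \<le> 0"
    proof (rule sum_nonpos)
      fix g assume g: "g \<in> TC - {ii h}"
      then have "g \<in> dedges H ii" "endf g \<in> S" "endf (ii g) \<notin> S"
        unfolding TC_def T_def dedges_def is_leg_def by auto
      then show "w g \<le> 0" using closedS by force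
    qed
    ultimately show ?thesis by simp
  qed
  have TLle: "(\<Sum>g\<in>TL. w g) \<le> (\<Sum>g\<in>{g\<in>H. is_leg ii g}. \<bar>lv g\<bar>)"
  proof -
    have "(\<Sum>g\<in>TL. w g) = (\<Sum>g\<in>TL. lv g)" using L unfolding TL_def T_def by auto
    also have "\<dots> \<le> (\<Sum>g\<in>TL. \<bar>lv g\<bar>)" by (rule sum_mono) simp
    also have "\<dots> \<le> (\<Sum>g\<in>{g\<in>H. is_leg ii g}. \<bar>lv g\<bar>)"
      by (rule sum_mono2) (use fH in \<open>auto simp: TL_def T_def\<close>)
    finally show ?thesis .
  qed
  have Sle: "- (\<Sum>x\<in>S. - (k * kappa H endf ii gen x)) \<le> (\<Sum>x\<in>V. \<bar>k * kappa H endf ii gen x\<bar>)"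
  proof -
    have "- (\<Sum>x\<in>S. - (k * kappa H endf ii gen x)) = (\<Sum>x\<in>S. k * kappa H endf ii gen x)"
      by (simp add: sum_negf)
    also have "\<dots> \<le> (\<Sum>x\<in>S. \<bar>k * kappa H endf ii gen x\<bar>)" by (rule sum_mono) simp
    also have "\<dots> \<le> (\<Sum>x\<in>V. \<bar>k * kappa H endf ii gen x\<bar>)"
      by (rule sum_mono2[OF fV SV]) simp
    finally show ?thesis .
  qed
  have "w (ii h) = - w h" using wd hD by (auto simp: add_eq_0_iff2)
  then show ?thesis using sumT sumsplit TI0 TCle TLle Sle by linarith
qed

lemma fin_funs:
  assumes "finite H"
  shows "finite {w :: 'h \<Rightarrow> int. (\<forall>g. g \<notin> H \<longrightarrow> w g = 0) \<and> (\<forall>g\<in>H. \<bar>w g\<bar> \<le> B)}"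
    (is "finite ?A")
proof (rule finite_subset[OF _ finite_set_of_finite_funs[OF assms, of "{-B..B}" 0]])
  show "?A \<subseteq> {f. \<forall>x. (x \<in> H \<longrightarrow> f x \<in> {-B..B}) \<and> (x \<notin> H \<longrightarrow> f x = 0)}"
    by (auto simp: abs_le_iff)
qed simp

theorem lemma3p9:
  fixes V :: "'v set" and H :: "'h set" and endf :: "'h \<Rightarrow> 'v" and ii :: "'h \<Rightarrow> 'h"
    and gen :: "'v \<Rightarrow> nat" and k :: int and lv :: "'h \<Rightarrow> int"
  assumes "is_graph V H endf ii"
    and "connected_graph V H endf ii"
    and "leg_weighted V H endf ii gen k lv"
  shows "finite {w \<in> weightings V H endf ii gen k lv. \<not> (\<exists>c. positive_cycle H endf ii w c)}"
proof -
  define B where "B = (\<Sum>g\<in>{g\<in>H. is_leg ii g}. \<bar>lv g\<bar>) + (\<Sum>x\<in>V. \<bar>k * kappa H endf ii gen x\<bar>)"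
  have fH: "finite H" and iH: "ii ` H \<subseteq> H" and inv: "\<forall>g\<in>H. ii (ii g) = g"
    using assms(1) unfolding is_graph_def by auto
  have B2: "(\<Sum>x\<in>V. \<bar>k * kappa H endf ii gen x\<bar>) \<ge> 0" by (rule sum_nonneg) simp
  have "{w \<in> weightings V H endf ii gen k lv. \<not> (\<exists>c. positive_cycle H endf ii w c)}
     \<subseteq> {w. (\<forall>g. g \<notin> H \<longrightarrow> w g = 0) \<and> (\<forall>g\<in>H. \<bar>w g\<bar> \<le> B)}"
  proof
    fix w assume "w \<in> {w \<in> weightings V H endf ii gen k lv. \<not> (\<exists>c. positive_cycle H endf ii w c)}"
    then have W: "is_weighting V H endf ii gen k w" and L: "\<forall>h\<in>H. is_leg ii h \<longrightarrow> w h = lv h"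
      and noc: "\<not> (\<exists>c. positive_cycle H endf ii w c)"
      unfolding weightings_def by auto
    have w0: "\<forall>g. g \<notin> H \<longrightarrow> w g = 0" and wd: "\<forall>g\<in>dedges H ii. w g + w (ii g) = 0"
      using W unfolding is_weighting_def by auto
    have "\<forall>g\<in>H. \<bar>w g\<bar> \<le> B"
    proof
      fix g assume g: "g \<in> H"
      show "\<bar>w g\<bar> \<le> B"
      proof (cases "is_leg ii g")
        case True
        have "\<bar>lv g\<bar> \<le> (\<Sum>g\<in>{g\<in>H. is_leg ii g}. \<bar>lv g\<bar>)"
          by (rule member_le_sum) (use g True fH in auto)
        moreover have "w g = lv g" using L g True by auto
        ultimately show ?thesis using B2 unfolding B_def by linarith
      next
        case False
        then have gD: "g \<in> dedges H ii" using g unfolding dedges_def is_leg_def by auto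
        have iD: "ii g \<in> dedges H ii" using g False iH inv unfolding dedges_def is_leg_def by auto
        have e: "w (ii g) = - w g" using wd gD by (auto simp: add_eq_0_iff2)
        have b1: "w g > 0 \<Longrightarrow> w g \<le> B" using cut_bound[OF assms(1) W L noc gD] unfolding B_def by auto
        have b2: "w g < 0 \<Longrightarrow> w (ii g) \<le> B" using cut_bound[OF assms(1) W L noc iD] e unfolding B_def by auto
        have "B \<ge> 0" unfolding B_def using B2 by (simp add: sum_nonneg)
        then show ?thesis using b1 b2 e by (cases "w g > 0"; cases "w g < 0") auto
      qed
    qed
    then show "w \<in> {w. (\<forall>g. g \<notin> H \<longrightarrow> w g = 0) \<and> (\<forall>g\<in>H. \<bar>w g\<bar> \<le> B)}" using w0 by auto
  qed
  then show ?thesis using fin_funs[OF fH, of B] finite_subset by blast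
qed

end
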